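(* Let $S$ be a semigroup and let $\mathrm{Pr}(S)$ be its predicatization. Then every direct power $\Pi\mathrm{Pr}(S)=\prod_{i\in I}\mathrm{Pr}(S)$ is $\mathcal{L}_{s\text{-}pred}(\Pi S)$-equationally Noetherian if and only if $S$ satisfies both quasi-identities $$\forall a\,\forall b\,\forall \alpha\,\forall\beta\ \big((a\alpha=a\beta)\to(b\alpha=b\beta)\big),$$ $$\forall a\,\forall b\,\forall \alpha\,\forall\beta\ \big((\alpha a=\beta a)\to(\alpha b=\beta b)\big).$$
   Context: The language $\mathcal{L}_{s\text{-}pred}=\{M\}$ has a single ternary relation symbol. The predicatization $\mathrm{Pr}(S)$ of a semigroup $S$ is the $\mathcal{L}_{s\text{-}pred}$-structure with universe $S$ in which $M(x,y,z)$ holds iff $xy=z$. The direct power $\prod_{i\in I}\mathrm{Pr}(S)$ consists of all sequences $[a_i\mid i\in I]$ with $M$ holding coordinatewise. $\mathcal{L}_{s\text{-}pred}(\Pi S)$ is the language extended by a constant symbol for every element of the direct power. An equation is an atomic formula of this language ($M(t_1,t_2,t_3)$ or $t_1=t_2$, each $t_k$ a variable or a constant); a system is any set of equations in a fixed finite set of variables $x_1,\dots,x_n$; two systems are equivalent if they have the same set of solutions in the structure. A structure is $\mathcal{L}_{s\text{-}pred}(\Pi S)$-equationally Noetherian if every such system is equivalent over it to a finite subsystem. *)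

theory Defs
  imports "HOL-Library.FuncSet"
begin

text \<open>Terms of the language L_{s-pred}(Pi S): variables x_k (k :: nat) or constants
  (elements of the direct power, represented as extensional functions I -> S).\<close>
datatype 'c trm = Var nat | Cst 'c

datatype 'c eqn = EqM "'c trm" "'c trm" "'c trm" | EqE "'c trm" "'c trm"

fun trm_vars :: "'c trm \<Rightarrow> nat set" where
  "trm_vars (Var k) = {k}" | "trm_vars (Cst c) = {}"

fun trm_consts :: "'c trm \<Rightarrow> 'c set" where
  "trm_consts (Var k) = {}" | "trm_consts (Cst c) = {c}"

fun eqn_vars :: "'c eqn \<Rightarrow> nat set" where
  "eqn_vars (EqM t1 t2 t3) = trm_vars t1 \<union> trm_vars t2 \<union> trm_vars t3"
| "eqn_vars (EqE t1 t2) = trm_vars t1 \<union> trm_vars t2"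

fun eqn_consts :: "'c eqn \<Rightarrow> 'c set" where
  "eqn_consts (EqM t1 t2 t3) = trm_consts t1 \<union> trm_consts t2 \<union> trm_consts t3"
| "eqn_consts (EqE t1 t2) = trm_consts t1 \<union> trm_consts t2"

fun trm_eval :: "(nat \<Rightarrow> 'c) \<Rightarrow> 'c trm \<Rightarrow> 'c" where
  "trm_eval p (Var k) = p k" | "trm_eval p (Cst c) = c"

text \<open>Universe of the direct power prod_{i in I} Pr(S), where S is the whole type 'a.\<close>
definition power :: "'i set \<Rightarrow> ('i \<Rightarrow> 'a) set" where
  "power I = PiE I (\<lambda>_. UNIV)"

definition powM :: "'i set \<Rightarrow> ('i \<Rightarrow> 'a::semigroup_mult) \<Rightarrow> ('i \<Rightarrow> 'a) \<Rightarrow> ('i \<Rightarrow> 'a) \<Rightarrow> bool" where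
  "powM I x y z \<longleftrightarrow> (\<forall>i\<in>I. x i * y i = z i)"

fun eqn_holds :: "'i set \<Rightarrow> (nat \<Rightarrow> ('i \<Rightarrow> 'a::semigroup_mult)) \<Rightarrow> ('i \<Rightarrow> 'a) eqn \<Rightarrow> bool" where
  "eqn_holds I p (EqM t1 t2 t3) = powM I (trm_eval p t1) (trm_eval p t2) (trm_eval p t3)"
| "eqn_holds I p (EqE t1 t2) = (trm_eval p t1 = trm_eval p t2)"

definition Sol :: "'i set \<Rightarrow> nat \<Rightarrow> ('i \<Rightarrow> 'a::semigroup_mult) eqn set \<Rightarrow> (nat \<Rightarrow> ('i \<Rightarrow> 'a)) set" where
  "Sol I n E = {p \<in> PiE {..<n} (\<lambda>_. power I). \<forall>e\<in>E. eqn_holds I p e}"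

definition is_system :: "'i set \<Rightarrow> nat \<Rightarrow> ('i \<Rightarrow> 'a) eqn set \<Rightarrow> bool" where
  "is_system I n E \<longleftrightarrow> (\<forall>e\<in>E. eqn_vars e \<subseteq> {..<n} \<and> eqn_consts e \<subseteq> power I)"

definition power_eq_noetherian :: "'i set \<Rightarrow> 'a::semigroup_mult itself \<Rightarrow> bool" where
  "power_eq_noetherian I (_::'a itself) \<longleftrightarrow>
     (\<forall>n. \<forall>E :: ('i \<Rightarrow> 'a) eqn set. is_system I n E \<longrightarrow>
        (\<exists>E0\<subseteq>E. finite E0 \<and> Sol I n E0 = Sol I n E))"

end

theory Submission
  imports Defs
begin

fun tshape :: "'c trm \<Rightarrow> unit trm" where
  "tshape (Var k) = Var k" | "tshape (Cst c) = Cst ()"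

fun eshape :: "'c eqn \<Rightarrow> unit eqn" where
  "eshape (EqM a b c) = EqM (tshape a) (tshape b) (tshape c)"
| "eshape (EqE a b) = EqE (tshape a) (tshape b)"

lemma tshape_eq: "tshape s = tshape t \<Longrightarrow> s = t \<or> (\<exists>c d. s = Cst c \<and> t = Cst d)"
  by (cases s; cases t) auto

lemma L1:
  fixes f g :: "('i \<Rightarrow> 'a::semigroup_mult) eqn"
  assumes Q1: "\<forall>a b \<alpha> \<beta> :: 'a. a * \<alpha> = a * \<beta> \<longrightarrow> b * \<alpha> = b * \<beta>"
    and Q2: "\<forall>a b \<alpha> \<beta> :: 'a. \<alpha> * a = \<beta> * a \<longrightarrow> \<alpha> * b = \<beta> * b"
    and sh: "eshape f = eshape g"
    and pf: "eqn_holds I p f" and pg: "eqn_holds I p g" and qf: "eqn_holds I q f"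
  shows "eqn_holds I q g"
proof (cases f)
  case (EqM s1 s2 s3)
  then obtain t1 t2 t3 where g: "g = EqM t1 t2 t3" and h: "tshape s1 = tshape t1" "tshape s2 = tshape t2" "tshape s3 = tshape t3"
    using sh by (cases g) auto
  show ?thesis
    using tshape_eq[OF h(1)] tshape_eq[OF h(2)] tshape_eq[OF h(3)] pf pg qf
    unfolding EqM g
    apply (elim disjE exE conjE)
    apply (auto simp: powM_def)
       apply (metis Q1)
      apply (metis Q2)
     apply (metis Q2)
    apply (metis Q1)
    done
next
  case (EqE s1 s2)
  then obtain t1 t2 where g: "g = EqE t1 t2" and h: "tshape s1 = tshape t1" "tshape s2 = tshape t2"
    using sh by (cases g) auto
  show ?thesis
    using tshape_eq[OF h(1)] tshape_eq[OF h(2)] pf pg qf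
    unfolding EqE g
    by (elim disjE exE conjE) auto
qed

lemma eqn_vars_eshape: "eqn_vars (eshape e) = eqn_vars e"
proof -
  have t: "trm_vars (tshape t) = trm_vars t" for t :: "'c trm" by (cases t) auto
  show ?thesis by (cases e) (auto simp: t)
qed

lemma finite_shapes: "finite {e :: unit eqn. eqn_vars e \<subseteq> {..<n}}"
proof -
  define T where "T = insert (Cst ()) (Var ` {..<n})"
  have fT: "finite T" unfolding T_def by simp
  have tT: "trm_vars t \<subseteq> {..<n} \<Longrightarrow> t \<in> T" for t :: "unit trm"
    unfolding T_def by (cases t) auto
  have "{e :: unit eqn. eqn_vars e \<subseteq> {..<n}} \<subseteq>
     (\<lambda>(a,b,c). EqM a b c) ` (T \<times> T \<times> T) \<union> (\<lambda>(a,b). EqE a b) ` (T \<times> T)"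
  proof
    fix e :: "unit eqn" assume "e \<in> {e. eqn_vars e \<subseteq> {..<n}}"
    then show "e \<in> (\<lambda>(a,b,c). EqM a b c) ` (T \<times> T \<times> T) \<union> (\<lambda>(a,b). EqE a b) ` (T \<times> T)"
    proof (cases e)
      case (EqM a b c)
      then have "(a,b,c) \<in> T \<times> T \<times> T" using \<open>e \<in> _\<close> by (auto intro!: tT)
      then show ?thesis using EqM by (auto intro!: image_eqI[of _ _ "(a,b,c)"])
    next
      case (EqE a b)
      then have "(a,b) \<in> T \<times> T" using \<open>e \<in> _\<close> by (auto intro!: tT)
      then show ?thesis using EqE by (auto intro!: image_eqI[of _ _ "(a,b)"])
    qed
  qed
  moreover have "finite ((\<lambda>(a,b,c). EqM a b c) ` (T \<times> T \<times> T) \<union> (\<lambda>(a,b). EqE a b) ` (T \<times> T))"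
    using fT by simp
  ultimately show ?thesis by (rule finite_subset)
qed

lemma backward:
  assumes Q1: "\<forall>a b \<alpha> \<beta> :: 'a::semigroup_mult. a * \<alpha> = a * \<beta> \<longrightarrow> b * \<alpha> = b * \<beta>"
    and Q2: "\<forall>a b \<alpha> \<beta> :: 'a. \<alpha> * a = \<beta> * a \<longrightarrow> \<alpha> * b = \<beta> * b"
  shows "power_eq_noetherian (I :: 'i set) TYPE('a)"
  unfolding power_eq_noetherian_def
proof (intro allI impI)
  fix n and E :: "('i \<Rightarrow> 'a) eqn set"
  assume sys: "is_system I n E"
  define P where "P = PiE {..<n} (\<lambda>_. power I :: ('i \<Rightarrow> 'a) set)"
  define Sh where "Sh = eshape ` E"
  have fSh: "finite Sh"
  proof (rule finite_subset[OF _ finite_shapes[of n]])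
    show "Sh \<subseteq> {e. eqn_vars e \<subseteq> {..<n}}"
      using sys unfolding Sh_def is_system_def by (force simp: eqn_vars_eshape)
  qed
  have "\<forall>\<sigma>\<in>Sh. \<exists>F. finite F \<and> F \<subseteq> E \<and>
      (\<forall>p\<in>P. (\<forall>f\<in>F. eqn_holds I p f) \<longrightarrow> (\<forall>e\<in>E. eshape e = \<sigma> \<longrightarrow> eqn_holds I p e))"
  proof
    fix \<sigma> assume "\<sigma> \<in> Sh"
    then obtain f0 where f0: "f0 \<in> E" "eshape f0 = \<sigma>" unfolding Sh_def by auto
    show "\<exists>F. finite F \<and> F \<subseteq> E \<and>
      (\<forall>p\<in>P. (\<forall>f\<in>F. eqn_holds I p f) \<longrightarrow> (\<forall>e\<in>E. eshape e = \<sigma> \<longrightarrow> eqn_holds I p e))"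
    proof (cases "\<exists>f g. f \<in> E \<and> g \<in> E \<and> eshape f = \<sigma> \<and> eshape g = \<sigma> \<and>
                      \<not> (\<exists>r\<in>P. eqn_holds I r f \<and> eqn_holds I r g)")
      case True
      then obtain f g where fg: "f \<in> E" "g \<in> E" "\<not> (\<exists>r\<in>P. eqn_holds I r f \<and> eqn_holds I r g)"
        by blast
      show ?thesis
        by (rule exI[of _ "{f, g}"]) (use fg in auto)
    next
      case False
      show ?thesis
      proof (rule exI[of _ "{f0}"], intro conjI ballI impI)
        fix p e assume p: "p \<in> P" "\<forall>f\<in>{f0}. eqn_holds I p f" and e: "e \<in> E" "eshape e = \<sigma>"
        from False f0 e obtain r where "r \<in> P" "eqn_holds I r f0" "eqn_holds I r e" by blast
        then show "eqn_holds I p e"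
          using L1[OF Q1 Q2, of f0 e I r p] f0 e p by auto
      qed (use f0 in auto)
    qed
  qed
  then obtain Fs where Fs: "\<And>\<sigma>. \<sigma> \<in> Sh \<Longrightarrow> finite (Fs \<sigma>) \<and> Fs \<sigma> \<subseteq> E \<and>
      (\<forall>p\<in>P. (\<forall>f\<in>Fs \<sigma>. eqn_holds I p f) \<longrightarrow> (\<forall>e\<in>E. eshape e = \<sigma> \<longrightarrow> eqn_holds I p e))"
    by metis
  define E0 where "E0 = \<Union>(Fs ` Sh)"
  have "E0 \<subseteq> E" "finite E0" using Fs fSh unfolding E0_def by auto
  moreover have "Sol I n E0 = Sol I n E"
  proof
    show "Sol I n E \<subseteq> Sol I n E0" using \<open>E0 \<subseteq> E\<close> unfolding Sol_def by auto
  next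
    show "Sol I n E0 \<subseteq> Sol I n E"
    proof
      fix p assume "p \<in> Sol I n E0"
      then have p: "p \<in> P" "\<forall>f\<in>E0. eqn_holds I p f" unfolding Sol_def P_def by auto
      have "eqn_holds I p e" if e: "e \<in> E" for e
      proof -
        have s: "eshape e \<in> Sh" using e unfolding Sh_def by auto
        then have "\<forall>f\<in>Fs (eshape e). eqn_holds I p f" using p unfolding E0_def by auto
        then show ?thesis using Fs[OF s] p e by blast
      qed
      then show "p \<in> Sol I n E" using p unfolding Sol_def P_def by auto
    qed
  qed
  ultimately show "\<exists>E0\<subseteq>E. finite E0 \<and> Sol I n E0 = Sol I n E" by blast
qed

lemma forward1:
  assumes inf: "infinite (UNIV :: 'i set)"
    and N: "power_eq_noetherian (UNIV :: 'i set) TYPE('a::semigroup_mult)"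
  shows "\<forall>a b \<alpha> \<beta> :: 'a. a * \<alpha> = a * \<beta> \<longrightarrow> b * \<alpha> = b * \<beta>"
proof (rule ccontr)
  assume "\<not> ?thesis"
  then obtain a b \<alpha> \<beta> :: 'a where ab: "a * \<alpha> = a * \<beta>" "b * \<alpha> \<noteq> b * \<beta>" by blast
  then have ne: "\<alpha> \<noteq> \<beta>" by auto
  define B where "B = (\<lambda>j::'i. EqM (Var 0) (Cst (\<lambda>i. if i = j then \<beta> else \<alpha>)) (Var 1))"
  define E where "E = insert (EqM (Var 0) (Cst (\<lambda>_::'i. \<alpha>)) (Var 1)) (range B)"
  have pw: "power (UNIV :: 'i set) = (UNIV :: ('i \<Rightarrow> 'a) set)"
    unfolding power_def by (simp add: PiE_UNIV_domain)
  have "is_system (UNIV :: 'i set) 2 E"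
    unfolding is_system_def E_def B_def pw by (auto simp: lessThan_def)
  then obtain E0 where E0: "E0 \<subseteq> E" "finite E0" "Sol UNIV 2 E0 = Sol UNIV 2 E"
    using N unfolding power_eq_noetherian_def by blast
  have injB: "inj B"
  proof
    fix x y assume "B x = B y"
    then have "(\<lambda>i. if i = x then \<beta> else \<alpha>) = (\<lambda>i. if i = y then \<beta> else \<alpha>)" unfolding B_def by simp
    from fun_cong[OF this, of x] show "x = y" using ne by (auto split: if_splits)
  qed
  define J where "J = B -` E0"
  have "finite J" unfolding J_def using E0(2) injB by (simp add: finite_vimageI)
  then obtain k where k: "k \<notin> J" proof - have "J \<noteq> UNIV" using inf \<open>finite J\<close> by auto then show ?thesis using that by auto qed
  define X where "X = (\<lambda>i. if i = k then b else a)"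
  define Y where "Y = (\<lambda>i. X i * \<alpha>)"
  define p where "p = (\<lambda>m::nat. if m = 0 then X else if m = 1 then Y else undefined)"
  have pP: "p \<in> PiE {..<2} (\<lambda>_. power UNIV)" unfolding pw p_def by (auto simp: PiE_iff extensional_def)
  have "p \<in> Sol UNIV 2 E0"
    unfolding Sol_def
  proof (intro CollectI conjI ballI pP)
    fix e assume e: "e \<in> E0"
    then have "e \<in> E" using E0 by auto
    then consider "e = EqM (Var 0) (Cst (\<lambda>_::'i. \<alpha>)) (Var 1)" | j where "e = B j" "j \<in> J"
      unfolding E_def J_def using e by auto
    then show "eqn_holds UNIV p e"
    proof cases
      case 1 then show ?thesis by (simp add: p_def Y_def powM_def)
    next
      case 2
      then have "j \<noteq> k" using k by auto
      then show ?thesis using 2 ab by (simp add: p_def Y_def X_def powM_def B_def)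
    qed
  qed
  moreover have "p \<notin> Sol UNIV 2 E"
  proof
    assume "p \<in> Sol UNIV 2 E"
    moreover have "B k \<in> E" unfolding E_def by auto
    ultimately have "eqn_holds UNIV p (B k)" unfolding Sol_def by auto
    then have "X k * \<beta> = Y k" by (simp add: p_def B_def powM_def) (drule spec[of _ k], simp)
    then show False using ab by (simp add: X_def Y_def)
  qed
  ultimately show False using E0 by simp
qed

lemma forward2:
  assumes inf: "infinite (UNIV :: 'i set)"
    and N: "power_eq_noetherian (UNIV :: 'i set) TYPE('a::semigroup_mult)"
  shows "\<forall>a b \<alpha> \<beta> :: 'a. \<alpha> * a = \<beta> * a \<longrightarrow> \<alpha> * b = \<beta> * b"
proof (rule ccontr)
  assume "\<not> ?thesis"
  then obtain a b \<alpha> \<beta> :: 'a where ab: "\<alpha> * a = \<beta> * a" "\<alpha> * b \<noteq> \<beta> * b" by blast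
  then have ne: "\<alpha> \<noteq> \<beta>" by auto
  define B where "B = (\<lambda>j::'i. EqM (Cst (\<lambda>i. if i = j then \<beta> else \<alpha>)) (Var 0) (Var 1))"
  define E where "E = insert (EqM (Cst (\<lambda>_::'i. \<alpha>)) (Var 0) (Var 1)) (range B)"
  have pw: "power (UNIV :: 'i set) = (UNIV :: ('i \<Rightarrow> 'a) set)"
    unfolding power_def by (simp add: PiE_UNIV_domain)
  have "is_system (UNIV :: 'i set) 2 E"
    unfolding is_system_def E_def B_def pw by (auto simp: lessThan_def)
  then obtain E0 where E0: "E0 \<subseteq> E" "finite E0" "Sol UNIV 2 E0 = Sol UNIV 2 E"
    using N unfolding power_eq_noetherian_def by blast
  have injB: "inj B"
  proof
    fix x y assume "B x = B y"
    then have "(\<lambda>i. if i = x then \<beta> else \<alpha>) = (\<lambda>i. if i = y then \<beta> else \<alpha>)" unfolding B_def by simp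
    from fun_cong[OF this, of x] show "x = y" using ne by (auto split: if_splits)
  qed
  define J where "J = B -` E0"
  have "finite J" unfolding J_def using E0(2) injB by (simp add: finite_vimageI)
  then obtain k where k: "k \<notin> J" proof - have "J \<noteq> UNIV" using inf \<open>finite J\<close> by auto then show ?thesis using that by auto qed
  define X where "X = (\<lambda>i. if i = k then b else a)"
  define Y where "Y = (\<lambda>i. \<alpha> * X i)"
  define p where "p = (\<lambda>m::nat. if m = 0 then X else if m = 1 then Y else undefined)"
  have pP: "p \<in> PiE {..<2} (\<lambda>_. power UNIV)" unfolding pw p_def by (auto simp: PiE_iff extensional_def)
  have "p \<in> Sol UNIV 2 E0"
    unfolding Sol_def
  proof (intro CollectI conjI ballI pP)
    fix e assume e: "e \<in> E0"
    then have "e \<in> E" using E0 by auto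
    then consider "e = EqM (Cst (\<lambda>_::'i. \<alpha>)) (Var 0) (Var 1)" | j where "e = B j" "j \<in> J"
      unfolding E_def J_def using e by auto
    then show "eqn_holds UNIV p e"
    proof cases
      case 1 then show ?thesis by (simp add: p_def Y_def powM_def)
    next
      case 2
      then have "j \<noteq> k" using k by auto
      then show ?thesis using 2 ab by (simp add: p_def Y_def X_def powM_def B_def)
    qed
  qed
  moreover have "p \<notin> Sol UNIV 2 E"
  proof
    assume "p \<in> Sol UNIV 2 E"
    moreover have "B k \<in> E" unfolding E_def by auto
    ultimately have "eqn_holds UNIV p (B k)" unfolding Sol_def by auto
    then have "\<beta> * X k = Y k" by (simp add: p_def B_def powM_def) (drule spec[of _ k], simp)
    then show False using ab by (simp add: X_def Y_def)
  qed
  ultimately show False using E0 by simp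
qed

theorem theorem1:
  assumes "infinite (UNIV :: 'i set)"
  shows "(\<forall>I :: 'i set. power_eq_noetherian I TYPE('a::semigroup_mult)) \<longleftrightarrow>
         ((\<forall>a b \<alpha> \<beta> :: 'a. a * \<alpha> = a * \<beta> \<longrightarrow> b * \<alpha> = b * \<beta>) \<and>
          (\<forall>a b \<alpha> \<beta> :: 'a. \<alpha> * a = \<beta> * a \<longrightarrow> \<alpha> * b = \<beta> * b))"
proof
  assume "\<forall>I :: 'i set. power_eq_noetherian I TYPE('a)"
  then have N: "power_eq_noetherian (UNIV :: 'i set) TYPE('a)" by (rule spec)
  show "(\<forall>a b \<alpha> \<beta> :: 'a. a * \<alpha> = a * \<beta> \<longrightarrow> b * \<alpha> = b * \<beta>) \<and>
          (\<forall>a b \<alpha> \<beta> :: 'a. \<alpha> * a = \<beta> * a \<longrightarrow> \<alpha> * b = \<beta> * b)"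
    using forward1[OF assms N] forward2[OF assms N] by (rule conjI)
next
  assume "(\<forall>a b \<alpha> \<beta> :: 'a. a * \<alpha> = a * \<beta> \<longrightarrow> b * \<alpha> = b * \<beta>) \<and>
          (\<forall>a b \<alpha> \<beta> :: 'a. \<alpha> * a = \<beta> * a \<longrightarrow> \<alpha> * b = \<beta> * b)"
  then show "\<forall>I :: 'i set. power_eq_noetherian I TYPE('a)"
    apply (intro allI) apply (rule backward) apply (erule conjunct1) apply (erule conjunct2) done
qed

end
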